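(* Let $M\in\mathrm{SL}(2,\mathbb Z)$ be a hyperbolic matrix, $N\in\mathbb N$, and $\{\phi_j\}_{j=1}^N$ an eigenbasis of $\hat M$ in $\mathcal H_N$ (setting in the context). Let $1\le p<\infty$, $L>0$, and let $D=D(r)$ satisfy $1/D=o(r)$ as $r\to0$; let $b^\pm_{q,r}$ be the majorant/minorant trigonometric polynomials of the arcs $B_1(q,r)\subset\mathbb T^1$ described in the context. Define $$\mathcal S^\pm(N,L):=\Big\{1\le j\le N:\ \sup_{q\in\mathbb T^1}\Big|\frac{\langle\mathrm{Op}_N(b^\pm_{q,r})\phi_j,\phi_j\rangle}{\mu(b^\pm_{q,r})}-1\Big|\ge L\Big\}.$$ Then $$\frac{\#\mathcal S^\pm(N,L)}{N}\le\frac{c\,D^{p-1}}{L^p}\sum_{m\in\mathbb Z,\,1\le|m|\le D}V_p\big(N,\hat T_N(m,0)\big),$$ where $c$ depends on $p$.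
   Context: $M=\exp\begin{pmatrix}\gamma&\beta\\-\alpha&-\gamma\end{pmatrix}\in\mathrm{SL}(2,\mathbb Z)$, $\gamma^2>\alpha\beta$. With $h=1/N$: $\hat q\psi=q\psi$, $\hat p\psi=\frac{h}{2\pi i}\psi'$, $\hat T_v=\exp(-\frac{2\pi i}{h}(v_1\hat p-v_2\hat q))$, $\hat H=\frac12\alpha\hat q^2+\frac12\beta\hat p^2+\frac\gamma2(\hat q\hat p+\hat p\hat q)$, $\hat M=e^{-2\pi i\hat H/h}$ acting on the $N$-dimensional Hilbert space $\mathcal H_N$ of distributions $\psi(q)=\sum_{k\in\mathbb Z}\Psi(k)\delta(q-(k+\kappa_1)/N)$, $\Psi(k+N)=e^{-2\pi i\kappa_2}\Psi(k)$ (fixed $\kappa\in\mathbb T^2$ chosen so that $\hat M$ preserves $\mathcal H_N$), inner product $\frac1N\sum_{k=1}^N\Psi(k)\overline{\Phi(k)}$; an eigenbasis is an orthonormal basis of eigenvectors of $\hat M$. $\hat T_N(n):=\hat T_{n/N}$ for $n\in\mathbb Z^2$. A function $a(q)=\sum_{m\in\mathbb Z}\tilde a(m)e^{2\pi imq}$ on $\mathbb T^1$ is quantized as $\mathrm{Op}_N(a)=\sum_m\tilde a(m)\hat T_N(m,0)$, and $\mu(a)=\int_{\mathbb T^1}a=\tilde a(0)$. For $m\ne0$, $V_p(N,\hat T_N(m,0)):=\frac1N\sum_{j=1}^N|\langle\hat T_N(m,0)\phi_j,\phi_j\rangle|^p$. Majorants/minorants: with $rD\ge1$, $a_r^\pm$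 are trigonometric polynomials on $\mathbb T^1$ with $a_r^-\le\chi_{B_1(0,r)}\le a_r^+$, $\widetilde{a_r^\pm}(m)=0$ for $|m|\ge D$, $\widetilde{a_r^\pm}(0)=\mathrm{Vol}(B_1(0,r))+O(1/D)$, $|\widetilde{a_r^\pm}(m)|\le c_0r$ for all $m$ with an absolute constant $c_0$; $b^\pm_{q,r}(y):=a_r^\pm(y-q)$. *)

theory Defs
  imports "HOL-Analysis.Analysis" "HOL-Library.Landau_Symbols"
begin

definition e2pi :: "real \<Rightarrow> complex" where
  "e2pi x = cis (2 * pi * x)"

text \<open>The Hilbert space H_N: coefficient sequences Psi(k) of the Dirac comb
  psi(q) = sum_k Psi(k) delta(q - (k + kappa_1)/N), with Psi(k+N) = e(-kappa_2) Psi(k).\<close>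
definition HN :: "nat \<Rightarrow> real \<times> real \<Rightarrow> (int \<Rightarrow> complex) set" where
  "HN N \<kappa> = {\<Psi>. \<forall>k. \<Psi> (k + int N) = e2pi (- snd \<kappa>) * \<Psi> k}"

definition ipN :: "nat \<Rightarrow> (int \<Rightarrow> complex) \<Rightarrow> (int \<Rightarrow> complex) \<Rightarrow> complex" where
  "ipN N \<Psi> \<Phi> = (1 / of_nat N) * (\<Sum>k\<in>{1..int N}. \<Psi> k * cnj (\<Phi> k))"

text \<open>T_N(n) = T_{n/N} = exp(-(2 pi i/h)((n1/N) p - (n2/N) q)), h = 1/N, acting on the
  coefficients: (T_N(n) Psi)(k) = e(n2 (k+kappa_1)/N) e(-n1 n2/(2N)) Psi(k - n1).\<close>
definition TN :: "nat \<Rightarrow> real \<times> real \<Rightarrow> int \<times> int \<Rightarrow> (int \<Rightarrow> complex) \<Rightarrow> (int \<Rightarrow> complex)" where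
  "TN N \<kappa> n \<Psi> = (\<lambda>k. e2pi (real_of_int (snd n) * (real_of_int k + fst \<kappa>) / real N)
                      * e2pi (- real_of_int (fst n * snd n) / (2 * real N)) * \<Psi> (k - fst n))"

definition fcoef :: "(real \<Rightarrow> real) \<Rightarrow> int \<Rightarrow> complex" where
  "fcoef f m = integral {0..1} (\<lambda>y. complex_of_real (f y) * e2pi (- (real_of_int m * y)))"

definition mu :: "(real \<Rightarrow> real) \<Rightarrow> real" where
  "mu f = integral {0..1} f"

definition OpN :: "nat \<Rightarrow> real \<times> real \<Rightarrow> (real \<Rightarrow> real) \<Rightarrow> (int \<Rightarrow> complex) \<Rightarrow> (int \<Rightarrow> complex)" where
  "OpN N \<kappa> f \<Psi> = (\<lambda>k. infsum (\<lambda>m::int. fcoef f m * TN N \<kappa> (m, 0) \<Psi> k) UNIV)"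

definition trig_poly :: "(real \<Rightarrow> real) \<Rightarrow> bool" where
  "trig_poly f \<longleftrightarrow> (\<exists>K::int. \<exists>c::int \<Rightarrow> complex.
      \<forall>y. complex_of_real (f y) = (\<Sum>m\<in>{-K..K}. c m * e2pi (real_of_int m * y)))"

definition tdist :: "real \<Rightarrow> real \<Rightarrow> real" where
  "tdist x y = \<bar>x - y - real_of_int (round (x - y))\<bar>"

definition arc_ind :: "real \<Rightarrow> real \<Rightarrow> real \<Rightarrow> real" where
  "arc_ind q r y = (if tdist y q < r then 1 else 0)"

definition arc_vol :: "real \<Rightarrow> real" where
  "arc_vol r = min (2 * r) 1"

definition Vp :: "nat \<Rightarrow> real \<times> real \<Rightarrow> (nat \<Rightarrow> int \<Rightarrow> complex) \<Rightarrow> real \<Rightarrow> int \<Rightarrow> real" where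
  "Vp N \<kappa> \<phi> p m = (1 / real N) *
     (\<Sum>j\<in>{1..N}. cmod (ipN N (TN N \<kappa> (m, 0) (\<phi> j)) (\<phi> j)) powr p)"

definition mat_app :: "int^2^2 \<Rightarrow> int \<times> int \<Rightarrow> int \<times> int" where
  "mat_app M n = (M$1$1 * fst n + M$1$2 * snd n, M$2$1 * fst n + M$2$2 * snd n)"

text \<open>M in SL(2,Z) of the form exp of a traceless real matrix with gamma^2 > alpha beta,
  i.e. det M = 1 and tr M > 2 (hyperbolic).\<close>
definition hyperbolic_SL2Z :: "int^2^2 \<Rightarrow> bool" where
  "hyperbolic_SL2Z M \<longleftrightarrow> det M = 1 \<and> M$1$1 + M$2$2 > 2"

text \<open>U is (up to a phase) the quantization M^ of M on H_N: a unitary operator on H_N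
  satisfying the exact Egorov property U T_N(n) = T_N(M n) U.\<close>
definition quantizes :: "nat \<Rightarrow> real \<times> real \<Rightarrow> int^2^2 \<Rightarrow> ((int \<Rightarrow> complex) \<Rightarrow> (int \<Rightarrow> complex)) \<Rightarrow> bool" where
  "quantizes N \<kappa> M U \<longleftrightarrow>
     U ` HN N \<kappa> \<subseteq> HN N \<kappa> \<and>
     (\<forall>\<Psi>\<in>HN N \<kappa>. \<forall>\<Phi>\<in>HN N \<kappa>. \<forall>c. U (\<lambda>k. c * \<Psi> k + \<Phi> k) = (\<lambda>k. c * U \<Psi> k + U \<Phi> k)) \<and>
     (\<forall>\<Psi>\<in>HN N \<kappa>. \<forall>\<Phi>\<in>HN N \<kappa>. ipN N (U \<Psi>) (U \<Phi>) = ipN N \<Psi> \<Phi>) \<and>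
     (\<forall>n. \<forall>\<Psi>\<in>HN N \<kappa>. U (TN N \<kappa> n \<Psi>) = TN N \<kappa> (mat_app M n) (U \<Psi>))"

definition eigenbasis :: "nat \<Rightarrow> real \<times> real \<Rightarrow> int^2^2 \<Rightarrow> (nat \<Rightarrow> int \<Rightarrow> complex) \<Rightarrow> bool" where
  "eigenbasis N \<kappa> M \<phi> \<longleftrightarrow>
     (\<forall>j\<in>{1..N}. \<phi> j \<in> HN N \<kappa>) \<and>
     (\<forall>i\<in>{1..N}. \<forall>j\<in>{1..N}. ipN N (\<phi> i) (\<phi> j) = (if i = j then 1 else 0)) \<and>
     (\<exists>U. quantizes N \<kappa> M U \<and> (\<forall>j\<in>{1..N}. \<exists>ev::complex. U (\<phi> j) = (\<lambda>k. ev * \<phi> j k)))"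

text \<open>The exceptional set S^{+-}(N,L) for the family b_{q,r}(y) = a_r(y - q).\<close>
definition exc_set :: "nat \<Rightarrow> real \<times> real \<Rightarrow> (nat \<Rightarrow> int \<Rightarrow> complex) \<Rightarrow> (real \<Rightarrow> real) \<Rightarrow> real \<Rightarrow> nat set" where
  "exc_set N \<kappa> \<phi> ar L = {j\<in>{1..N}.
     (SUP q\<in>{0..<1}. cmod (ipN N (OpN N \<kappa> (\<lambda>y. ar (y - q)) (\<phi> j)) (\<phi> j)
                          / complex_of_real (mu (\<lambda>y. ar (y - q))) - 1)) \<ge> L}"

end

theory Submission
  imports Defs
begin

lemma e2pi_add: "e2pi x * e2pi y = e2pi (x + y)"
  by (simp add: e2pi_def cis_mult algebra_simps)

lemma e2pi_zero[simp]: "e2pi 0 = 1" by (simp add: e2pi_def)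

lemma e2pi_int: "e2pi (real_of_int k) = 1"
  unfolding e2pi_def by (metis cis_2pi cis_multiple_2pi Ints_of_int mult.commute)

lemma integral_e2pi:
  fixes k :: int
  shows "((\<lambda>y. e2pi (real_of_int k * y)) has_integral (if k = 0 then 1 else 0)) {0..1}"
proof (cases "k = 0")
  case True
  then show ?thesis using has_integral_const_real[of "1::complex" 0 1] by simp
next
  case False
  define F where "F y = e2pi (real_of_int k * y) / (\<i> * (2 * pi * real_of_int k))" for y
  have d: "(F has_vector_derivative e2pi (real_of_int k * y)) (at y within {0..1})" for y
  proof -
    have "((\<lambda>y. cis (2 * pi * (real_of_int k * y))) has_derivative
        (\<lambda>t. (2 * pi * (real_of_int k * t)) *\<^sub>R (\<i> * cis (2 * pi * (real_of_int k * y))))) (at y within {0..1})"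
      by (intro derivative_eq_intros) auto
    then show ?thesis
      unfolding F_def e2pi_def has_vector_derivative_def
      using False
      by (auto intro!: derivative_eq_intros simp: field_simps scaleR_conv_of_real)
  qed
  have "((\<lambda>y. e2pi (real_of_int k * y)) has_integral F 1 - F 0) {0..1}"
    by (rule fundamental_theorem_of_calculus) (auto intro: d)
  moreover have "F 1 - F 0 = 0" unfolding F_def using e2pi_int[of k] by simp
  ultimately show ?thesis using False by simp
qed


lemma fcoef_trig_has:
  fixes d :: "int \<Rightarrow> complex"
  assumes f: "\<forall>y. complex_of_real (f y) = (\<Sum>n\<in>{-K..K}. d n * e2pi (real_of_int n * y))"
  shows "((\<lambda>y. complex_of_real (f y) * e2pi (- (real_of_int m * y))) has_integral
           (if m \<in> {-K..K} then d m else 0)) {0..1}"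
proof -
  have eq: "complex_of_real (f y) * e2pi (- (real_of_int m * y)) =
      (\<Sum>n\<in>{-K..K}. d n * e2pi (real_of_int (n - m) * y))" for y
    unfolding f[rule_format] sum_distrib_right
    by (intro sum.cong refl) (simp add: mult.assoc e2pi_add algebra_simps)
  have "((\<lambda>y. \<Sum>n\<in>{-K..K}. d n * e2pi (real_of_int (n - m) * y)) has_integral
          (\<Sum>n\<in>{-K..K}. d n * (if n - m = 0 then 1 else 0))) {0..1}"
    by (intro has_integral_sum has_integral_mult_right integral_e2pi) auto
  moreover have "(\<Sum>n\<in>{-K..K}. d n * (if n - m = 0 then 1 else 0)) = (if m \<in> {-K..K} then d m else 0)"
    by (simp add: if_distrib cong: if_cong)
  ultimately show ?thesis unfolding eq by simp
qed

lemma fcoef_trig: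
  fixes d :: "int \<Rightarrow> complex"
  assumes f: "\<forall>y. complex_of_real (f y) = (\<Sum>n\<in>{-K..K}. d n * e2pi (real_of_int n * y))"
  shows "fcoef f m = (if m \<in> {-K..K} then d m else 0)"
  unfolding fcoef_def using fcoef_trig_has[OF f] by blast

lemma fcoef0_mu:
  fixes d :: "int \<Rightarrow> complex"
  assumes f: "\<forall>y. complex_of_real (f y) = (\<Sum>n\<in>{-K..K}. d n * e2pi (real_of_int n * y))"
  shows "fcoef f 0 = complex_of_real (mu f)"
proof -
  define I where "I = fcoef f 0"
  have h: "((\<lambda>y. complex_of_real (f y)) has_integral I) {0..1}"
    using fcoef_trig_has[OF f, of 0] unfolding I_def fcoef_trig[OF f] by simp
  have "((\<lambda>y. Re (complex_of_real (f y))) has_integral Re I) {0..1}"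
    using has_integral_linear[OF h bounded_linear_Re] by (simp add: o_def)
  then have r: "(f has_integral Re I) {0..1}" by simp
  have "((\<lambda>y. Im (complex_of_real (f y))) has_integral Im I) {0..1}"
    using has_integral_linear[OF h bounded_linear_Im] by (simp add: o_def)
  then have "Im I = 0" using has_integral_0_eq by fastforce
  moreover have "mu f = Re I" unfolding mu_def using r by blast
  ultimately show ?thesis unfolding I_def[symmetric] by (simp add: complex_eq_iff)
qed

lemma trig_shift:
  fixes c :: "int \<Rightarrow> complex"
  assumes f: "\<forall>y. complex_of_real (f y) = (\<Sum>n\<in>{-K..K}. c n * e2pi (real_of_int n * y))"
  shows "\<forall>y. complex_of_real (f (y - q)) = (\<Sum>n\<in>{-K..K}. (c n * e2pi (- (real_of_int n * q))) * e2pi (real_of_int n * y))"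
  using f by (auto intro!: sum.cong simp: mult.assoc e2pi_add algebra_simps)


lemma TN_zero: "TN N \<kappa> (0, 0) \<psi> = \<psi>"
  unfolding TN_def by simp

lemma ipN_lin:
  assumes "finite W"
  shows "ipN N (\<lambda>k. \<Sum>m\<in>W. g m * T m k) \<psi> = (\<Sum>m\<in>W. g m * ipN N (T m) \<psi>)"
  unfolding ipN_def sum_distrib_right sum_distrib_left
  by (subst sum.swap) (simp add: algebra_simps)

lemma ip_Op:
  fixes c :: "int \<Rightarrow> complex"
  assumes f: "\<forall>y. complex_of_real (a y) = (\<Sum>n\<in>{-K..K}. c n * e2pi (real_of_int n * y))"
    and nrm: "ipN N \<psi> \<psi> = 1"
  shows "ipN N (OpN N \<kappa> (\<lambda>y. a (y - q)) \<psi>) \<psi> = fcoef a 0 +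
     (\<Sum>m\<in>{-\<bar>K\<bar>..\<bar>K\<bar>} - {0}. fcoef a m * e2pi (- (real_of_int m * q)) * ipN N (TN N \<kappa> (m, 0) \<psi>) \<psi>)"
proof -
  define W where "W = {-\<bar>K\<bar>..\<bar>K\<bar>}"
  have fW: "finite W" unfolding W_def by simp
  have fa: "fcoef a m = (if m \<in> {-K..K} then c m else 0)" for m
    using fcoef_trig[OF f] .
  have fb: "fcoef (\<lambda>y. a (y - q)) m = fcoef a m * e2pi (- (real_of_int m * q))" for m
    using fcoef_trig[OF trig_shift[OF f, of q]] fa by simp
  have op: "OpN N \<kappa> (\<lambda>y. a (y - q)) \<psi> =
      (\<lambda>k. \<Sum>m\<in>W. (fcoef a m * e2pi (- (real_of_int m * q))) * TN N \<kappa> (m, 0) \<psi> k)"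
    unfolding OpN_def
  proof (rule ext)
    fix k
    have "infsum (\<lambda>m. fcoef (\<lambda>y. a (y - q)) m * TN N \<kappa> (m, 0) \<psi> k) UNIV
        = infsum (\<lambda>m. (fcoef a m * e2pi (- (real_of_int m * q))) * TN N \<kappa> (m, 0) \<psi> k) W"
      by (rule infsum_cong_neutral) (auto simp: fb fa W_def)
    then show "infsum (\<lambda>m. fcoef (\<lambda>y. a (y - q)) m * TN N \<kappa> (m, 0) \<psi> k) UNIV
        = (\<Sum>m\<in>W. (fcoef a m * e2pi (- (real_of_int m * q))) * TN N \<kappa> (m, 0) \<psi> k)"
      using fW by simp
  qed
  have "ipN N (OpN N \<kappa> (\<lambda>y. a (y - q)) \<psi>) \<psi> =
      (\<Sum>m\<in>W. (fcoef a m * e2pi (- (real_of_int m * q))) * ipN N (TN N \<kappa> (m, 0) \<psi>) \<psi>)"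
    unfolding op by (rule ipN_lin[OF fW])
  also have "\<dots> = fcoef a 0 + (\<Sum>m\<in>W - {0}. fcoef a m * e2pi (- (real_of_int m * q)) * ipN N (TN N \<kappa> (m, 0) \<psi>) \<psi>)"
    by (subst sum.remove[OF fW, of 0]) (auto simp: W_def TN_zero nrm)
  finally show ?thesis unfolding W_def .
qed


lemma holder_pos:
  fixes y :: "'a \<Rightarrow> real"
  assumes fin: "finite T" and ne: "T \<noteq> {}" and pos: "\<And>m. m \<in> T \<Longrightarrow> y m > 0" and p: "p \<ge> 1"
  shows "(\<Sum>m\<in>T. y m) powr p \<le> real (card T) powr (p - 1) * (\<Sum>m\<in>T. y m powr p)"
proof -
  define t where "t = real (card T)"
  have t: "t > 0" unfolding t_def using fin ne by (simp add: card_gt_0_iff)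
  have "(\<Sum>m\<in>T. (1 / t) *\<^sub>R y m) powr p \<le> (\<Sum>m\<in>T. (1 / t) * y m powr p)"
  proof (rule convex_on_sum[OF fin ne powr_convex[OF p]])
    show "(\<Sum>i\<in>T. 1 / t) = 1" using t by (simp add: t_def)
  qed (use t pos in auto)
  then have "((\<Sum>m\<in>T. y m) / t) powr p \<le> (\<Sum>m\<in>T. y m powr p) / t"
    by (simp add: sum_divide_distrib[symmetric] sum_distrib_left[symmetric])
  then have "(\<Sum>m\<in>T. y m) powr p / t powr p \<le> (\<Sum>m\<in>T. y m powr p) / t"
    using t pos by (simp add: powr_divide sum_nonneg less_imp_le)
  then have "(\<Sum>m\<in>T. y m) powr p \<le> (\<Sum>m\<in>T. y m powr p) / t * t powr p"
    using t by (simp add: divide_le_eq)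
  also have "\<dots> = t powr (p - 1) * (\<Sum>m\<in>T. y m powr p)"
    using t by (simp add: powr_diff field_simps)
  finally show ?thesis unfolding t_def .
qed

lemma holder_sum:
  fixes y :: "'a \<Rightarrow> real"
  assumes fin: "finite T" and nn: "\<And>m. m \<in> T \<Longrightarrow> y m \<ge> 0" and p: "p \<ge> 1"
    and n: "real (card T) \<le> n"
  shows "(\<Sum>m\<in>T. y m) powr p \<le> n powr (p - 1) * (\<Sum>m\<in>T. y m powr p)"
proof -
  define T' where "T' = {m\<in>T. y m > 0}"
  have fT': "finite T'" using fin unfolding T'_def by simp
  have s1: "(\<Sum>m\<in>T. y m) = (\<Sum>m\<in>T'. y m)"
    unfolding T'_def using fin nn by (intro sum.mono_neutral_right) (auto simp: less_le)
  have s2: "(\<Sum>m\<in>T. y m powr p) = (\<Sum>m\<in>T'. y m powr p)"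
    unfolding T'_def using fin nn p by (intro sum.mono_neutral_right) (auto simp: less_le)
  show ?thesis
  proof (cases "T' = {}")
    case True
    then show ?thesis unfolding s1 s2 by simp
  next
    case False
    have c: "card T' \<le> card T" unfolding T'_def using fin by (intro card_mono) auto
    have "(\<Sum>m\<in>T'. y m) powr p \<le> real (card T') powr (p - 1) * (\<Sum>m\<in>T'. y m powr p)"
      by (rule holder_pos[OF fT' False _ p]) (auto simp: T'_def)
    also have "\<dots> \<le> n powr (p - 1) * (\<Sum>m\<in>T'. y m powr p)"
      apply (rule mult_right_mono)
       apply (rule powr_mono2)
      using p c n False fT' by (auto simp: sum_nonneg card_gt_0_iff)
    finally show ?thesis unfolding s1 s2 .
  qed
qed


lemma card_T_le:
  assumes "d \<ge> 0"
  shows "finite {m::int. 1 \<le> \<bar>m\<bar> \<and> real_of_int \<bar>m\<bar> \<le> d}"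
    and "real (card {m::int. 1 \<le> \<bar>m\<bar> \<and> real_of_int \<bar>m\<bar> \<le> d}) \<le> 2 * d"
proof -
  define F where "F = \<lfloor>d\<rfloor>"
  have sub: "{m::int. 1 \<le> \<bar>m\<bar> \<and> real_of_int \<bar>m\<bar> \<le> d} \<subseteq> {-F..-1} \<union> {1..F}"
  proof
    fix m assume "m \<in> {m::int. 1 \<le> \<bar>m\<bar> \<and> real_of_int \<bar>m\<bar> \<le> d}"
    then have "1 \<le> \<bar>m\<bar>" "\<bar>m\<bar> \<le> F" unfolding F_def by (auto simp: le_floor_iff)
    then show "m \<in> {-F..-1} \<union> {1..F}" by auto
  qed
  show "finite {m::int. 1 \<le> \<bar>m\<bar> \<and> real_of_int \<bar>m\<bar> \<le> d}"
    by (rule finite_subset[OF sub]) auto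
  have "card {m::int. 1 \<le> \<bar>m\<bar> \<and> real_of_int \<bar>m\<bar> \<le> d} \<le> card ({-F..-1} \<union> {1..F})"
    by (rule card_mono[OF _ sub]) auto
  also have "\<dots> \<le> card {-F..-1} + card {1..F}" by (rule card_Un_le)
  also have "\<dots> = 2 * nat F" by simp
  finally have "real (card {m::int. 1 \<le> \<bar>m\<bar> \<and> real_of_int \<bar>m\<bar> \<le> d}) \<le> 2 * real (nat F)"
    by linarith
  also have "\<dots> \<le> 2 * d" unfolding F_def using assms by simp
  finally show "real (card {m::int. 1 \<le> \<bar>m\<bar> \<and> real_of_int \<bar>m\<bar> \<le> d}) \<le> 2 * d" .
qed


lemma ratio_bound:
  fixes c :: "int \<Rightarrow> complex"
  assumes f: "\<forall>y. complex_of_real (a y) = (\<Sum>n\<in>{-K..K}. c n * e2pi (real_of_int n * y))"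
    and nrm: "ipN N \<psi> \<psi> = 1"
    and A: "mu a \<ge> r" and r: "r > 0"
    and van: "\<forall>m. real_of_int \<bar>m\<bar> \<ge> d \<longrightarrow> fcoef a m = 0"
    and cb: "\<forall>m. cmod (fcoef a m) \<le> B * r" and d: "d \<ge> 0"
  shows "cmod (ipN N (OpN N \<kappa> (\<lambda>y. a (y - q)) \<psi>) \<psi> / complex_of_real (mu (\<lambda>y. a (y - q))) - 1)
     \<le> B * (\<Sum>m\<in>{m::int. 1 \<le> \<bar>m\<bar> \<and> real_of_int \<bar>m\<bar> \<le> d}. cmod (ipN N (TN N \<kappa> (m, 0) \<psi>) \<psi>))"
proof -
  define T where "T = {m::int. 1 \<le> \<bar>m\<bar> \<and> real_of_int \<bar>m\<bar> \<le> d}"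
  define W where "W = {-\<bar>K\<bar>..\<bar>K\<bar>} - {0}"
  define h where "h m = fcoef a m * e2pi (- (real_of_int m * q)) * ipN N (TN N \<kappa> (m, 0) \<psi>) \<psi>" for m
  have fT: "finite T" unfolding T_def using card_T_le(1)[OF d] .
  have fW: "finite W" unfolding W_def by simp
  have fa: "fcoef a m = (if m \<in> {-K..K} then c m else 0)" for m
    using fcoef_trig[OF f] .
  have mub: "mu (\<lambda>y. a (y - q)) = mu a"
  proof -
    have "complex_of_real (mu (\<lambda>y. a (y - q))) = fcoef (\<lambda>y. a (y - q)) 0"
      using fcoef0_mu[OF trig_shift[OF f, of q]] by simp
    also have "\<dots> = fcoef a 0"
      using fcoef_trig[OF trig_shift[OF f, of q], of 0] fa by simp
    also have "\<dots> = complex_of_real (mu a)" using fcoef0_mu[OF f] .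
    finally show ?thesis by simp
  qed
  have Apos: "mu a > 0" using A r by linarith
  have ip: "ipN N (OpN N \<kappa> (\<lambda>y. a (y - q)) \<psi>) \<psi> = complex_of_real (mu a) + sum h W"
    using ip_Op[OF f nrm, of \<kappa> q] fcoef0_mu[OF f] unfolding h_def W_def by simp
  have sWT: "sum h W = sum h T"
  proof -
    have "sum h W = sum h (W \<union> T)"
      by (rule sum.mono_neutral_left) (use fW fT in \<open>auto simp: h_def T_def W_def fa\<close>)
    also have "\<dots> = sum h T"
    proof (rule sum.mono_neutral_right)
      show "\<forall>i\<in>W \<union> T - T. h i = 0"
      proof
        fix i assume "i \<in> W \<union> T - T"
        then have "real_of_int \<bar>i\<bar> \<ge> d" "i \<noteq> 0" unfolding T_def W_def by auto
        then show "h i = 0" using van unfolding h_def by simp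
      qed
    qed (use fW fT in auto)
    finally show ?thesis .
  qed
  have eq: "ipN N (OpN N \<kappa> (\<lambda>y. a (y - q)) \<psi>) \<psi> / complex_of_real (mu (\<lambda>y. a (y - q))) - 1
      = sum h T / complex_of_real (mu a)"
    unfolding mub ip sWT using Apos by (simp add: field_simps)
  have "cmod (sum h T) \<le> (\<Sum>m\<in>T. cmod (h m))" by (rule norm_sum)
  also have "\<dots> \<le> (\<Sum>m\<in>T. B * r * cmod (ipN N (TN N \<kappa> (m, 0) \<psi>) \<psi>))"
  proof (rule sum_mono)
    fix m
    have "cmod (h m) = cmod (fcoef a m) * cmod (ipN N (TN N \<kappa> (m, 0) \<psi>) \<psi>)"
      unfolding h_def by (simp add: norm_mult e2pi_def)
    also have "\<dots> \<le> B * r * cmod (ipN N (TN N \<kappa> (m, 0) \<psi>) \<psi>)"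
      using cb by (intro mult_right_mono) auto
    finally show "cmod (h m) \<le> B * r * cmod (ipN N (TN N \<kappa> (m, 0) \<psi>) \<psi>)" .
  qed
  finally have s: "cmod (sum h T) \<le> r * (B * (\<Sum>m\<in>T. cmod (ipN N (TN N \<kappa> (m, 0) \<psi>) \<psi>)))"
    by (simp add: sum_distrib_left algebra_simps)
  have Bnn: "B * (\<Sum>m\<in>T. cmod (ipN N (TN N \<kappa> (m, 0) \<psi>) \<psi>)) \<ge> 0"
  proof -
    have "0 \<le> cmod (fcoef a 0)" by simp
    then have "B \<ge> 0" using cb r by (metis zero_le_mult_iff not_less order.trans)
    then show ?thesis by (simp add: sum_nonneg)
  qed
  have "cmod (sum h T / complex_of_real (mu a)) = cmod (sum h T) / mu a"
    using Apos by (simp add: norm_divide)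
  also have "\<dots> \<le> r * (B * (\<Sum>m\<in>T. cmod (ipN N (TN N \<kappa> (m, 0) \<psi>) \<psi>))) / mu a"
    using s Apos by (simp add: divide_right_mono)
  also have "\<dots> \<le> B * (\<Sum>m\<in>T. cmod (ipN N (TN N \<kappa> (m, 0) \<psi>) \<psi>))"
    using A Apos Bnn by (simp add: divide_le_eq mult.commute mult_right_mono)
  finally show ?thesis unfolding eq T_def .
qed


theorem lemma3p5:
  fixes p c0 :: real
  assumes "p \<ge> 1"
  shows "\<exists>c>0. \<forall>(D::real \<Rightarrow> real) (a::real \<Rightarrow> real \<Rightarrow> real) (C1::real) (maj::bool).
    ((\<lambda>r. 1 / D r) \<in> o[at_right 0](\<lambda>r. r) \<and>
     (\<forall>r. 0 < r \<and> r < 1/2 \<longrightarrow>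
        r * D r \<ge> 1 \<and> trig_poly (a r) \<and>
        (\<forall>y. if maj then arc_ind 0 r y \<le> a r y else a r y \<le> arc_ind 0 r y) \<and>
        (\<forall>m. real_of_int \<bar>m\<bar> \<ge> D r \<longrightarrow> fcoef (a r) m = 0) \<and>
        cmod (fcoef (a r) 0 - complex_of_real (arc_vol r)) \<le> C1 / D r \<and>
        (\<forall>m. cmod (fcoef (a r) m) \<le> c0 * r)))
    \<longrightarrow> (\<exists>r0>0. \<forall>r. 0 < r \<and> r < r0 \<longrightarrow>
          (\<forall>(N::nat) (\<kappa>::real \<times> real) (M::int^2^2) (\<phi>::nat \<Rightarrow> int \<Rightarrow> complex) (L::real).
             N \<ge> 1 \<and> hyperbolic_SL2Z M \<and> eigenbasis N \<kappa> M \<phi> \<and> L > 0 \<longrightarrow>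
             real (card (exc_set N \<kappa> \<phi> (a r) L)) / real N
               \<le> c * D r powr (p - 1) / L powr p *
                  (\<Sum>m\<in>{m::int. 1 \<le> \<bar>m\<bar> \<and> real_of_int \<bar>m\<bar> \<le> D r}. Vp N \<kappa> \<phi> p m)))"
proof -
  define K where "K = max c0 1"
  have K1: "K \<ge> 1" unfolding K_def by simp
  define c where "c = K powr p * 2 powr (p - 1)"
  have cpos: "c > 0" unfolding c_def using K1 by simp
  show ?thesis
  proof (rule exI[of _ c], intro conjI cpos allI impI)
    fix D :: "real \<Rightarrow> real" and a :: "real \<Rightarrow> real \<Rightarrow> real" and C1 :: real and maj :: bool
    assume H: "(\<lambda>r. 1 / D r) \<in> o[at_right 0](\<lambda>r. r) \<and>
     (\<forall>r. 0 < r \<and> r < 1/2 \<longrightarrow>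
        r * D r \<ge> 1 \<and> trig_poly (a r) \<and>
        (\<forall>y. if maj then arc_ind 0 r y \<le> a r y else a r y \<le> arc_ind 0 r y) \<and>
        (\<forall>m. real_of_int \<bar>m\<bar> \<ge> D r \<longrightarrow> fcoef (a r) m = 0) \<and>
        cmod (fcoef (a r) 0 - complex_of_real (arc_vol r)) \<le> C1 / D r \<and>
        (\<forall>m. cmod (fcoef (a r) m) \<le> c0 * r))"
    define \<epsilon> where "\<epsilon> = 1 / (\<bar>C1\<bar> + 1)"
    have eps: "\<epsilon> > 0" unfolding \<epsilon>_def by simp
    have "eventually (\<lambda>r. norm (1 / D r) \<le> \<epsilon> * norm r) (at_right (0::real))"
      using landau_o.smallD[OF conjunct1[OF H] eps] .
    then obtain b where b: "b > 0" and bP: "\<And>y. y > 0 \<Longrightarrow> y < b \<Longrightarrow> norm (1 / D y) \<le> \<epsilon> * norm y"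
      unfolding eventually_at_right_field by auto
    show "\<exists>r0>0. \<forall>r. 0 < r \<and> r < r0 \<longrightarrow>
          (\<forall>(N::nat) (\<kappa>::real \<times> real) (M::int^2^2) (\<phi>::nat \<Rightarrow> int \<Rightarrow> complex) (L::real).
             N \<ge> 1 \<and> hyperbolic_SL2Z M \<and> eigenbasis N \<kappa> M \<phi> \<and> L > 0 \<longrightarrow>
             real (card (exc_set N \<kappa> \<phi> (a r) L)) / real N
               \<le> c * D r powr (p - 1) / L powr p *
                  (\<Sum>m\<in>{m::int. 1 \<le> \<bar>m\<bar> \<and> real_of_int \<bar>m\<bar> \<le> D r}. Vp N \<kappa> \<phi> p m))"
    proof (intro exI[of _ "min b (1/2)"] conjI allI impI)
      show "min b (1/2) > 0" using b by simp
      fix r :: real and N :: nat and \<kappa> :: "real \<times> real" and M :: "int^2^2"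
        and \<phi> :: "nat \<Rightarrow> int \<Rightarrow> complex" and L :: real
      assume r: "0 < r \<and> r < min b (1/2)"
      assume NL: "N \<ge> 1 \<and> hyperbolic_SL2Z M \<and> eigenbasis N \<kappa> M \<phi> \<and> L > 0"
      have r0: "r > 0" "r < 1/2" "r < b" using r by auto
      have Hr: "r * D r \<ge> 1" "trig_poly (a r)"
        "\<forall>m. real_of_int \<bar>m\<bar> \<ge> D r \<longrightarrow> fcoef (a r) m = 0"
        "cmod (fcoef (a r) 0 - complex_of_real (arc_vol r)) \<le> C1 / D r"
        "\<forall>m. cmod (fcoef (a r) m) \<le> c0 * r"
        using conjunct2[OF H] r0 by blast+
      obtain K0 cc where trig: "\<forall>y. complex_of_real (a r y) = (\<Sum>m\<in>{-K0..K0}. cc m * e2pi (real_of_int m * y))"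
        using Hr(2) unfolding trig_poly_def by blast
      have Dpos: "D r > 0" using Hr(1) r0 mult_nonneg_nonpos[of r "D r"] by linarith
      have "norm (1 / D r) \<le> \<epsilon> * norm r" using bP r0 by blast
      then have invD: "1 / D r \<le> \<epsilon> * r" using Dpos r0 by simp
      have "C1 / D r \<le> \<bar>C1\<bar> * (1 / D r)" using Dpos by (simp add: divide_right_mono)
      also have "\<dots> \<le> \<bar>C1\<bar> * (\<epsilon> * r)" using invD by (intro mult_left_mono) auto
      also have "\<dots> \<le> r" unfolding \<epsilon>_def using r0
        by (simp add: field_simps)
      finally have C1D: "C1 / D r \<le> r" .
      have av: "arc_vol r = 2 * r" unfolding arc_vol_def using r0 by simp
      have "cmod (complex_of_real (mu (a r)) - complex_of_real (2 * r)) \<le> r"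
        using Hr(4) C1D fcoef0_mu[OF trig] av by simp
      then have "\<bar>mu (a r) - 2 * r\<bar> \<le> r"
        by (metis norm_of_real of_real_diff)
      then have muA: "mu (a r) \<ge> r" by linarith
      have cb: "\<forall>m. cmod (fcoef (a r) m) \<le> K * r"
        using Hr(5) r0 unfolding K_def by (metis max.cobounded1 mult_right_mono less_imp_le order.trans)
      define T where "T = {m::int. 1 \<le> \<bar>m\<bar> \<and> real_of_int \<bar>m\<bar> \<le> D r}"
      have fT: "finite T" unfolding T_def using card_T_le(1) Dpos by simp
      have cT: "real (card T) \<le> 2 * D r" unfolding T_def using card_T_le(2) Dpos by simp
      define x where "x j m = cmod (ipN N (TN N \<kappa> (m, 0) (\<phi> j)) (\<phi> j))" for j m
      define Bj where "Bj j = K * (\<Sum>m\<in>T. x j m)" for j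
      have eb: "\<forall>j\<in>{1..N}. ipN N (\<phi> j) (\<phi> j) = 1" using NL unfolding eigenbasis_def by auto
      have exc: "L \<le> Bj j" if j: "j \<in> exc_set N \<kappa> \<phi> (a r) L" for j
      proof -
        have j1: "j \<in> {1..N}" and Lle: "L \<le> (SUP q\<in>{0..<1}. cmod (ipN N (OpN N \<kappa> (\<lambda>y. a r (y - q)) (\<phi> j)) (\<phi> j)
                          / complex_of_real (mu (\<lambda>y. a r (y - q))) - 1))"
          using j unfolding exc_set_def by auto
        have "(SUP q\<in>{0..<1}. cmod (ipN N (OpN N \<kappa> (\<lambda>y. a r (y - q)) (\<phi> j)) (\<phi> j)
                          / complex_of_real (mu (\<lambda>y. a r (y - q))) - 1)) \<le> Bj j"
        proof (rule cSUP_least)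
          show "{0..<1::real} \<noteq> {}" by simp
          fix q
          show "cmod (ipN N (OpN N \<kappa> (\<lambda>y. a r (y - q)) (\<phi> j)) (\<phi> j)
                          / complex_of_real (mu (\<lambda>y. a r (y - q))) - 1) \<le> Bj j"
            unfolding Bj_def x_def T_def
            by (rule ratio_bound[OF trig eb[rule_format, OF j1] muA r0(1) Hr(3) cb]) (use Dpos in simp)
        qed
        then show ?thesis using Lle by linarith
      qed
      define Q where "Q j = K powr p * (2 * D r) powr (p - 1) * (\<Sum>m\<in>T. x j m powr p)" for j
      have Qnn: "Q j \<ge> 0" for j unfolding Q_def by (simp add: sum_nonneg)
      have LQ: "L powr p \<le> Q j" if j: "j \<in> exc_set N \<kappa> \<phi> (a r) L" for j
      proof -
        have "L powr p \<le> Bj j powr p" using exc[OF j] NL assms by (intro powr_mono2) auto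
        also have "\<dots> = K powr p * (\<Sum>m\<in>T. x j m) powr p"
          unfolding Bj_def using K1 by (simp add: powr_mult x_def sum_nonneg)
        also have "\<dots> \<le> K powr p * ((2 * D r) powr (p - 1) * (\<Sum>m\<in>T. x j m powr p))"
          by (intro mult_left_mono holder_sum[OF fT _ assms cT]) (auto simp: x_def)
        finally show ?thesis unfolding Q_def by (simp add: mult.assoc)
      qed
      have excsub: "exc_set N \<kappa> \<phi> (a r) L \<subseteq> {1..N}" unfolding exc_set_def by auto
      have fexc: "finite (exc_set N \<kappa> \<phi> (a r) L)" by (rule finite_subset[OF excsub]) simp
      have "real (card (exc_set N \<kappa> \<phi> (a r) L)) * L powr p = (\<Sum>j\<in>exc_set N \<kappa> \<phi> (a r) L. L powr p)"
        by simp
      also have "\<dots> \<le> (\<Sum>j\<in>exc_set N \<kappa> \<phi> (a r) L. Q j)" by (rule sum_mono) (rule LQ)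
      also have "\<dots> \<le> (\<Sum>j\<in>{1..N}. Q j)" by (rule sum_mono2[OF _ excsub]) (auto simp: Qnn)
      also have "\<dots> = K powr p * (2 * D r) powr (p - 1) * (\<Sum>m\<in>T. \<Sum>j\<in>{1..N}. x j m powr p)"
        unfolding Q_def by (simp add: sum_distrib_left sum.swap[of _ T])
      also have "\<dots> = K powr p * (2 * D r) powr (p - 1) * (real N * (\<Sum>m\<in>T. Vp N \<kappa> \<phi> p m))"
        using NL by (simp add: Vp_def x_def sum_distrib_left)
      also have "\<dots> = c * D r powr (p - 1) * real N * (\<Sum>m\<in>T. Vp N \<kappa> \<phi> p m)"
        unfolding c_def using Dpos by (simp add: powr_mult)
      finally have main: "real (card (exc_set N \<kappa> \<phi> (a r) L)) * L powr p \<le>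
          c * D r powr (p - 1) * real N * (\<Sum>m\<in>T. Vp N \<kappa> \<phi> p m)" .
      have Lp: "L powr p > 0" using NL by simp
      have Npos: "real N > 0" using NL by simp
      show "real (card (exc_set N \<kappa> \<phi> (a r) L)) / real N
               \<le> c * D r powr (p - 1) / L powr p *
                  (\<Sum>m\<in>{m::int. 1 \<le> \<bar>m\<bar> \<and> real_of_int \<bar>m\<bar> \<le> D r}. Vp N \<kappa> \<phi> p m)"
        using main Lp Npos unfolding T_def[symmetric]
        by (simp add: divide_le_eq field_simps)
    qed
  qed
qed

end
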